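(* Run the algorithm BARBAT described in the context. For every epoch $m$ and every arm $k\in[K]$, conditionally on everything that happened before epoch $m$, \[\Pr\left[|r_k^m - \mu_k| \geq \sqrt{\frac{4\ln(4 / \beta_m)}{\widetilde{n}_k^m}} + \frac{2C_m}{N_m}\right] \leq \beta_m,\] where $C_m=\max_{k'\in[K]}\sum_{t=T_{m-1}+1}^{T_m}|\widetilde r_{t,k'}-r_{t,k'}|$.
   Context: Setting. $K\ge2$ arms; in each round $t$ a reward vector $(r_{t,k})_k$ with values in $[0,1]$ is drawn i.i.d. from a fixed unknown distribution with means $\mu_k$; an adversary who sees it produces corrupted rewards $\widetilde r_{t,k}\in[0,1]$ (determined by the history before round $t$ and the round-$t$ reward vector, without knowledge of the agent's round-$t$ choice); the agent pulls $I_t$ and observes $\widetilde r_{t,I_t}$. Algorithm BARBAT. Initialize $T_0=0$, $\Delta_k^0=1$, $r_k^0=0$. For epochs $m=1,2,\dots$: $\zeta_m=(m+4)2^{2(m+4)}\ln K$, $\delta_m=1/(K\zeta_m)$, $\lambda_m=2^8\ln(4K/\delta_m)$, $\beta_m=\delta_m/K$, $n_k^m=\lambda_m(\Delta_k^{m-1})^{-2}$, $N_m=\lceil K\lambda_m2^{2(m-1)}\rceil$, $T_m=T_{m-1}+N_m$; $k_m=\arg\max_kr_k^{m-1}$ (ties by smallest index); $\widetilde n_k^m=n_k^m$ for $k\ne k_m$, $\widetilde n_{k_m}^m=N_m-\sum_{k\ne k_m}n_k^m$. In each round $t=T_{m-1}+1,\dots,T_m$, draw $I_t$ independently with $\Pr[I_t=k]=\widetilde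 n_k^m/N_m$, observe $\widetilde r_{t,I_t}$ and add it to $S_{I_t}^m$ ($S_k^m$ starts at $0$ each epoch). At the end of the epoch: $r_k^m=\min\{S_k^m/\widetilde n_k^m,1\}$, $r_*^m=\max_k\{r_k^m-\sqrt{4\ln(4/\beta_m)/\widetilde n_k^m}\}$, $\Delta_k^m=\max\{2^{-m},r_*^m-r_k^m\}$. *)

theory Defs
  imports "HOL-Probability.Probability"
begin

text \<open>Arms are indexed by 0, ..., K-1. Epoch parameters of BARBAT.\<close>

definition barbat_zeta :: "nat \<Rightarrow> nat \<Rightarrow> real" where
  "barbat_zeta K m = (real m + 4) * 2 ^ (2 * (m + 4)) * ln (real K)"

definition barbat_delta :: "nat \<Rightarrow> nat \<Rightarrow> real" where
  "barbat_delta K m = 1 / (real K * barbat_zeta K m)"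

definition barbat_lambda :: "nat \<Rightarrow> nat \<Rightarrow> real" where
  "barbat_lambda K m = 2 ^ 8 * ln (4 * real K / barbat_delta K m)"

definition barbat_beta :: "nat \<Rightarrow> nat \<Rightarrow> real" where
  "barbat_beta K m = barbat_delta K m / real K"

text \<open>Epoch length N_m (m >= 1).\<close>
definition barbat_N :: "nat \<Rightarrow> nat \<Rightarrow> nat" where
  "barbat_N K m = nat \<lceil>real K * barbat_lambda K m * 2 ^ (2 * (m - 1))\<rceil>"

text \<open>n_k^m, given Delta^{m-1}.\<close>
definition barbat_n :: "nat \<Rightarrow> nat \<Rightarrow> (nat \<Rightarrow> real) \<Rightarrow> nat \<Rightarrow> real" where
  "barbat_n K m Delta k = barbat_lambda K m / (Delta k) ^ 2"

definition barbat_km :: "nat \<Rightarrow> (nat \<Rightarrow> real) \<Rightarrow> nat" where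
  "barbat_km K r = (LEAST k. k < K \<and> (\<forall>j<K. r j \<le> r k))"

text \<open>tilde n_k^m, given Delta^{m-1} and r^{m-1}.\<close>
definition barbat_ntil :: "nat \<Rightarrow> nat \<Rightarrow> (nat \<Rightarrow> real) \<Rightarrow> (nat \<Rightarrow> real) \<Rightarrow> nat \<Rightarrow> real" where
  "barbat_ntil K m Delta r k =
     (if k = barbat_km K r
      then real (barbat_N K m) - (\<Sum>j\<in>{..<K} - {barbat_km K r}. barbat_n K m Delta j)
      else barbat_n K m Delta k)"

text \<open>r_*^m computed at the end of epoch m from the new estimates r' = r^m.\<close>
definition barbat_rstar :: "nat \<Rightarrow> nat \<Rightarrow> (nat \<Rightarrow> real) \<Rightarrow> (nat \<Rightarrow> real) \<Rightarrow> (nat \<Rightarrow> real) \<Rightarrow> real" where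
  "barbat_rstar K m Delta r r' =
     Max ((\<lambda>k. r' k - sqrt (4 * ln (4 / barbat_beta K m) / barbat_ntil K m Delta r k)) ` {..<K})"

text \<open>States (m, Delta^{m-1}, r^{m-1}) at the start of epoch m that the algorithm can reach:
  the initial state, and every state obtained from a reachable one by the end-of-epoch
  update, for any values r^m in [0,1] of the epoch's estimates.\<close>
inductive barbat_reach :: "nat \<Rightarrow> nat \<Rightarrow> (nat \<Rightarrow> real) \<Rightarrow> (nat \<Rightarrow> real) \<Rightarrow> bool"
  for K :: nat where
  init: "barbat_reach K 1 (\<lambda>_. 1) (\<lambda>_. 0)"
| step: "barbat_reach K m Delta r \<Longrightarrow> (\<forall>k<K. r' k \<in> {0..1}) \<Longrightarrow>
         barbat_reach K (Suc m)
           (\<lambda>k. max (1 / 2 ^ m) (barbat_rstar K m Delta r r' - r' k)) r'"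

text \<open>Probability space of one epoch, conditionally on the past: N rounds, in each an
  i.i.d. reward vector (law D) and an independent arm choice (law q).
  A sample point w maps round t < N to the pair (r_t, I_t).\<close>
definition epoch_space :: "nat \<Rightarrow> (nat \<Rightarrow> real) measure \<Rightarrow> nat pmf
     \<Rightarrow> (nat \<Rightarrow> (nat \<Rightarrow> real) \<times> nat) measure" where
  "epoch_space N D q = PiM {..<N} (\<lambda>_. D \<Otimes>\<^sub>M measure_pmf q)"

text \<open>Corrupted reward vector at round t: the adversary sees the history of rounds < t
  (true rewards and choices, hence also the past corrupted rewards) and the round-t
  reward vector, but not the round-t choice.\<close>
definition corrupted ::
  "(nat \<Rightarrow> (nat \<Rightarrow> (nat \<Rightarrow> real) \<times> nat) \<Rightarrow> (nat \<Rightarrow> real) \<Rightarrow> (nat \<Rightarrow> real))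
   \<Rightarrow> nat \<Rightarrow> (nat \<Rightarrow> (nat \<Rightarrow> real) \<times> nat) \<Rightarrow> nat \<Rightarrow> real" where
  "corrupted adv t w = adv t (restrict w {..<t}) (fst (w t))"

definition epoch_S where
  "epoch_S adv N k w = (\<Sum>t<N. if snd (w t) = k then corrupted adv t w k else 0)"

definition epoch_r where
  "epoch_r adv N ntil k w = min (epoch_S adv N k w / ntil) 1"

definition epoch_C where
  "epoch_C adv K N w = Max ((\<lambda>k'. \<Sum>t<N. \<bar>corrupted adv t w k' - fst (w t) k'\<bar>) ` {..<K})"

end

theory Submission
  imports Defs
begin


lemma ln2_ge: "1/2 \<le> ln (2::real)"
proof -
  have "exp (1/2::real) \<le> 1 + 1/2 + (1/2)\<^sup>2" by (rule exp_bound) auto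
  then have "exp (1/2::real) \<le> 2" by (simp add: power2_eq_square)
  then show ?thesis by (subst ln_ge_iff) auto
qed

lemma barbat_params:
  assumes K: "K \<ge> 2" and m: "m \<ge> 1"
  shows "0 < barbat_beta K m" "barbat_beta K m < 1"
    "barbat_lambda K m = 256 * ln (4 / barbat_beta K m)"
proof -
  have lnK: "1/2 \<le> ln (real K)"
  proof -
    have "ln 2 \<le> ln (real K)" using K by (subst ln_le_cancel_iff) auto
    then show ?thesis using ln2_ge by linarith
  qed
  have p4: "(1::real) \<le> 2 ^ (2 * (m + 4))" by simp
  have z: "1 \<le> barbat_zeta K m"
  proof -
    have "(1::real) \<le> (real m + 4) * 2 ^ (2 * (m + 4)) * (1/2)"
    proof -
      have "(4::real) * 1 \<le> (real m + 4) * 2 ^ (2 * (m + 4))" by (rule mult_mono) (use p4 in auto)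
      then show ?thesis by simp
    qed
    also have "\<dots> \<le> barbat_zeta K m" unfolding barbat_zeta_def
      by (rule mult_left_mono) (use lnK in auto)
    finally show ?thesis .
  qed
  have Kr: "(2::real) \<le> real K" using K by simp
  have "0 < barbat_delta K m" unfolding barbat_delta_def using z Kr by simp
  then show b0: "0 < barbat_beta K m" unfolding barbat_beta_def using Kr by simp
  have "2 * 1 \<le> real K * barbat_zeta K m" by (rule mult_mono) (use z Kr in auto)
  then have "barbat_delta K m \<le> 1/2" unfolding barbat_delta_def using z Kr
    by (simp add: field_simps)
  then show "barbat_beta K m < 1" unfolding barbat_beta_def using Kr by (simp add: field_simps)
  have "4 * real K / barbat_delta K m = 4 / barbat_beta K m"
    unfolding barbat_beta_def using Kr \<open>0 < barbat_delta K m\<close> by (simp add: field_simps)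
  then show "barbat_lambda K m = 256 * ln (4 / barbat_beta K m)" unfolding barbat_lambda_def by simp
qed

lemma barbat_lambda_pos:
  assumes K: "K \<ge> 2" and m: "m \<ge> 1"
  shows "0 < ln (4 / barbat_beta K m)" "0 < barbat_lambda K m"
proof -
  have "1 < 4 / barbat_beta K m" using barbat_params[OF K m] by (simp add: field_simps)
  then show "0 < ln (4 / barbat_beta K m)" by (intro ln_gt_zero) simp
  then show "0 < barbat_lambda K m" using barbat_params(3)[OF K m] by simp
qed

lemma barbat_N_ge:
  assumes K: "K \<ge> 2" and m: "m \<ge> 1"
  shows "real K * barbat_lambda K m * 2 ^ (2 * (m - 1)) \<le> real (barbat_N K m)"
proof -
  define x where "x = real K * barbat_lambda K m * 2 ^ (2 * (m - 1))"
  have x0: "0 \<le> x" unfolding x_def using barbat_lambda_pos[OF K m] by simp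
  have "x \<le> of_int \<lceil>x\<rceil>" by (rule le_of_int_ceiling)
  moreover have "0 \<le> \<lceil>x\<rceil>" using x0 by simp
  ultimately have "x \<le> real (nat \<lceil>x\<rceil>)" by simp
  then show ?thesis unfolding barbat_N_def x_def .
qed

lemma ntil_ge:
  assumes K: "K \<ge> 2" and m: "m \<ge> 1"
    and D: "\<forall>j<K. 1 / 2 ^ (m - 1) \<le> Delta j \<and> Delta j \<le> 1" and k: "k < K"
  shows "barbat_lambda K m \<le> barbat_ntil K m Delta r k"
proof -
  define lam where "lam = barbat_lambda K m"
  define P where "P = (2::real) ^ (m - 1)"
  have lam: "0 < lam" using barbat_lambda_pos[OF K m] by (simp add: lam_def)
  have P: "1 \<le> P" by (simp add: P_def)
  have nlo: "lam \<le> barbat_n K m Delta j" if "j < K" for j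
  proof -
    have d: "0 < Delta j" "Delta j \<le> 1" using D that by (auto intro: less_le_trans[of _ "1 / 2 ^ (m - 1)"])
    then have "(Delta j)\<^sup>2 \<le> 1" by (simp add: abs_square_le_1)
    then show ?thesis unfolding barbat_n_def lam_def[symmetric] using d lam
      by (simp add: field_simps)
  qed
  have nhi: "barbat_n K m Delta j \<le> lam * P\<^sup>2" if "j < K" for j
  proof -
    have d: "1 / P \<le> Delta j" using D that by (simp add: P_def)
    have "0 < 1 / P" using P by simp
    then have dp: "0 < Delta j" using d by linarith
    have "1 \<le> P * Delta j" using d P by (simp add: field_simps)
    then have "1 \<le> (P * Delta j)\<^sup>2" by (rule one_le_power)
    then have "1 / (Delta j)\<^sup>2 \<le> P\<^sup>2" using dp by (simp add: field_simps power_mult_distrib)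
    then show ?thesis unfolding barbat_n_def lam_def[symmetric] using lam
    proof -
      assume h: "1 / (Delta j)\<^sup>2 \<le> P\<^sup>2"
      have "lam * (1 / (Delta j)\<^sup>2) \<le> lam * P\<^sup>2" by (rule mult_left_mono) (use h lam in auto)
      then show "lam / (Delta j)\<^sup>2 \<le> lam * P\<^sup>2" by simp
    qed
  qed
  show ?thesis
  proof (cases "k = barbat_km K r")
    case False
    then show ?thesis using nlo[OF k] by (simp add: barbat_ntil_def lam_def)
  next
    case True
    have fin: "finite ({..<K} - {k})" by simp
    have card: "card ({..<K} - {k}) = K - 1" using k by simp
    have "(\<Sum>j\<in>{..<K} - {k}. barbat_n K m Delta j) \<le> real (card ({..<K} - {k})) * (lam * P\<^sup>2)"
      by (rule sum_bounded_above) (use nhi in auto)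
    also have "\<dots> = (real K - 1) * (lam * P\<^sup>2)" using card K by (simp add: of_nat_diff)
    finally have s: "(\<Sum>j\<in>{..<K} - {k}. barbat_n K m Delta j) \<le> (real K - 1) * (lam * P\<^sup>2)" .
    have N: "real K * lam * P\<^sup>2 \<le> real (barbat_N K m)"
      using barbat_N_ge[OF K m] by (simp add: lam_def P_def power_mult[symmetric] mult.commute)
    have "lam \<le> lam * P\<^sup>2" using lam P by (simp add: one_le_power)
    then show ?thesis using s N True by (simp add: barbat_ntil_def lam_def[symmetric] algebra_simps)
  qed
qed

lemma barbat_inv:
  assumes "barbat_reach K m Delta r" "K \<ge> 2"
  shows "m \<ge> 1 \<and> (\<forall>j<K. 1 / 2 ^ (m - 1) \<le> Delta j \<and> Delta j \<le> 1)"
  using assms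
proof (induction rule: barbat_reach.induct)
  case init
  then show ?case by simp
next
  case (step m Delta r r')
  have rs: "barbat_rstar K m Delta r r' \<le> 1"
    unfolding barbat_rstar_def
  proof (subst Max_le_iff)
    show "finite ((\<lambda>k. r' k - sqrt (4 * ln (4 / barbat_beta K m) / barbat_ntil K m Delta r k)) ` {..<K})" by simp
    show "(\<lambda>k. r' k - sqrt (4 * ln (4 / barbat_beta K m) / barbat_ntil K m Delta r k)) ` {..<K} \<noteq> {}"
      using step by (auto simp: lessThan_empty_iff)
    show "\<forall>a\<in>(\<lambda>k. r' k - sqrt (4 * ln (4 / barbat_beta K m) / barbat_ntil K m Delta r k)) ` {..<K}. a \<le> 1"
    proof
      fix a assume "a \<in> (\<lambda>k. r' k - sqrt (4 * ln (4 / barbat_beta K m) / barbat_ntil K m Delta r k)) ` {..<K}"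
      then obtain j where j: "j < K" and a: "a = r' j - sqrt (4 * ln (4 / barbat_beta K m) / barbat_ntil K m Delta r j)" by auto
      have "0 < barbat_lambda K m" using barbat_lambda_pos step by auto
      then have "0 < barbat_ntil K m Delta r j" using ntil_ge[of K m Delta j r] step j by auto
      moreover have "0 < ln (4 / barbat_beta K m)" using barbat_lambda_pos step by auto
      ultimately have "0 \<le> sqrt (4 * ln (4 / barbat_beta K m) / barbat_ntil K m Delta r j)" by simp
      moreover have "r' j \<le> 1" using step(2) j by auto
      ultimately show "a \<le> 1" using a by linarith
    qed
  qed
  have "(1::real) / 2 ^ m \<le> 1" by simp
  then show ?case using step rs by (auto simp: max_def)
qed




lemma measurable_upd_in:
  assumes w: "w \<in> space (PiM I (\<lambda>_. M))" and t: "t \<in> I"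
  shows "(\<lambda>x. w(t:=x)) \<in> measurable M (PiM I (\<lambda>_. M))"
proof -
  have "(\<lambda>x i. (if i = t then x else w i)) \<in> measurable M (PiM I (\<lambda>_. M))"
  proof (rule measurable_PiM_single')
    fix i assume "i \<in> I"
    then show "(\<lambda>x. if i = t then x else w i) \<in> measurable M M"
      using w by (cases "i = t") (auto simp: space_PiM intro!: measurable_const dest: PiE_mem)
  next
    show "(\<lambda>x i. if i = t then x else w i) \<in> space M \<rightarrow> (\<Pi>\<^sub>E i\<in>I. space M)"
      using w t by (auto simp: space_PiM PiE_def extensional_def Pi_def)
  qed
  then show ?thesis by (simp add: fun_upd_def)
qed

lemma mgf_chain:
  fixes M :: "'a measure" and Y :: "nat \<Rightarrow> (nat \<Rightarrow> 'a) \<Rightarrow> real" and N :: nat and c :: real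
  assumes P: "prob_space M"
    and meas: "\<forall>t<N. Y t \<in> borel_measurable (PiM {..<N} (\<lambda>_. M))"
    and loc: "\<forall>t<N. \<forall>w. Y t w = Y t (restrict w {..t})"
    and step: "\<forall>t<N. \<forall>w \<in> space (PiM {..<N} (\<lambda>_. M)).
                 (\<integral>\<^sup>+ x. ennreal (exp (Y t (w(t:=x)))) \<partial>M) \<le> ennreal c"
  shows "(\<integral>\<^sup>+ w. ennreal (exp (\<Sum>t<N. Y t w)) \<partial>PiM {..<N} (\<lambda>_. M)) \<le> ennreal c ^ N"
proof -
  interpret M: prob_space M by (rule P)
  interpret PS: product_prob_space "\<lambda>_. M" by (rule product_prob_spaceI) (rule P)
  obtain x0 where x0: "x0 \<in> space M" using M.not_empty by blast
  define ext where "ext n w = (\<lambda>i\<in>{..<N}. if i < n then w i else x0)" for n and w :: "nat \<Rightarrow> 'a"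
  have ext_meas: "ext n \<in> measurable (PiM {..<n} (\<lambda>_. M)) (PiM {..<N} (\<lambda>_. M))" if "n \<le> N" for n
    unfolding ext_def
    apply (rule measurable_restrict)
    subgoal for i by (cases "i < n") (auto simp: x0 intro!: measurable_component_singleton)
    done
  have ext_loc: "restrict (ext n w) {..t} = restrict w {..t}" if "t < n" "n \<le> N" for n t w
    using that by (auto simp: ext_def restrict_def fun_eq_iff)
  have Ymeas: "Y t \<in> borel_measurable (PiM {..<n} (\<lambda>_. M))" if "t < n" "n \<le> N" for t n
  proof -
    have "(\<lambda>w. Y t (ext n w)) \<in> borel_measurable (PiM {..<n} (\<lambda>_. M))"
      using measurable_comp[OF ext_meas[OF that(2)], of "Y t" borel] meas that by (simp add: comp_def)
    moreover have "Y t (ext n w) = Y t w" for w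
      using loc that ext_loc[OF that] by (metis order_less_le_trans)
    ultimately show ?thesis by simp
  qed
  have "n \<le> N \<Longrightarrow> (\<integral>\<^sup>+ w. ennreal (exp (\<Sum>t<n. Y t w)) \<partial>PiM {..<n} (\<lambda>_. M)) \<le> ennreal c ^ n" for n
  proof (induction n)
    case 0
    then show ?case by (simp add: PiM_empty)
  next
    case (Suc n)
    have n: "n < N" using Suc by simp
    have ins: "{..<Suc n} = insert n {..<n}" by auto
    have fm: "(\<lambda>w. ennreal (exp (\<Sum>t<Suc n. Y t w))) \<in> borel_measurable (PiM (insert n {..<n}) (\<lambda>_. M))"
    proof -
      have "(\<lambda>w. \<Sum>t<Suc n. Y t w) \<in> borel_measurable (PiM {..<Suc n} (\<lambda>_. M))"
        by (rule borel_measurable_sum) (use Ymeas Suc.prems in auto)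
      then have "(\<lambda>w. ennreal (exp (\<Sum>t<Suc n. Y t w))) \<in> borel_measurable (PiM {..<Suc n} (\<lambda>_. M))"
        by measurable
      then show ?thesis unfolding ins .
    qed
    have "(\<integral>\<^sup>+ w. ennreal (exp (\<Sum>t<Suc n. Y t w)) \<partial>PiM {..<Suc n} (\<lambda>_. M))
        = (\<integral>\<^sup>+ w. (\<integral>\<^sup>+ x. ennreal (exp (\<Sum>t<Suc n. Y t (w(n:=x)))) \<partial>M) \<partial>PiM {..<n} (\<lambda>_. M))"
      unfolding ins by (rule PS.product_nn_integral_insert[OF _ _ fm[unfolded ins]]) auto
    also have "\<dots> \<le> (\<integral>\<^sup>+ w. ennreal (exp (\<Sum>t<n. Y t w)) * ennreal c \<partial>PiM {..<n} (\<lambda>_. M))"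
    proof (rule nn_integral_mono)
      fix w assume w: "w \<in> space (PiM {..<n} (\<lambda>_. M))"
      have eq1: "Y t (w(n:=x)) = Y t w" if "t < n" for t x
      proof -
        have "restrict (w(n:=x)) {..t} = restrict w {..t}" using that by (auto simp: restrict_def fun_eq_iff)
        then show ?thesis using loc that n by (metis order_less_trans)
      qed
      have eq2: "Y n (w(n:=x)) = Y n ((ext n w)(n:=x))" for x
      proof -
        have "restrict (w(n:=x)) {..n} = restrict ((ext n w)(n:=x)) {..n}"
          using n by (auto simp: restrict_def fun_eq_iff ext_def)
        then show ?thesis using loc n by metis
      qed
      have ew: "ext n w \<in> space (PiM {..<N} (\<lambda>_. M))"
        using measurable_space[OF ext_meas w] Suc.prems by simp
      have "(\<integral>\<^sup>+ x. ennreal (exp (\<Sum>t<Suc n. Y t (w(n:=x)))) \<partial>M)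
          = (\<integral>\<^sup>+ x. ennreal (exp (\<Sum>t<n. Y t w)) * ennreal (exp (Y n ((ext n w)(n:=x)))) \<partial>M)"
        by (rule nn_integral_cong) (simp add: eq1 eq2 exp_add ennreal_mult)
      also have "\<dots> = ennreal (exp (\<Sum>t<n. Y t w)) * (\<integral>\<^sup>+ x. ennreal (exp (Y n ((ext n w)(n:=x)))) \<partial>M)"
      proof (rule nn_integral_cmult)
        have "(\<lambda>x. Y n ((ext n w)(n:=x))) \<in> borel_measurable M"
          using measurable_comp[OF measurable_upd_in[OF ew, of n], of "Y n" borel] meas n by (simp add: comp_def)
        then show "(\<lambda>x. ennreal (exp (Y n ((ext n w)(n:=x))))) \<in> borel_measurable M" by measurable
      qed
      also have "\<dots> \<le> ennreal (exp (\<Sum>t<n. Y t w)) * ennreal c"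
        using step n ew by (auto intro!: mult_left_mono)
      finally show "(\<integral>\<^sup>+ x. ennreal (exp (\<Sum>t<Suc n. Y t (w(n:=x)))) \<partial>M) \<le> ennreal (exp (\<Sum>t<n. Y t w)) * ennreal c" .
    qed
    also have "\<dots> = (\<integral>\<^sup>+ w. ennreal (exp (\<Sum>t<n. Y t w)) \<partial>PiM {..<n} (\<lambda>_. M)) * ennreal c"
      by (rule nn_integral_multc) (use Ymeas Suc.prems in \<open>auto intro!: measurable_compose[OF _ measurable_ennreal] borel_measurable_exp borel_measurable_sum\<close>)
    also have "\<dots> \<le> ennreal c ^ n * ennreal c"
      using Suc by (auto intro!: mult_right_mono)
    finally show ?case by (simp add: mult.commute)
  qed
  then show ?thesis by simp
qed



lemma exp_quad_bound:
  fixes x :: real assumes "\<bar>x\<bar> \<le> 1" shows "exp x \<le> 1 + x + x\<^sup>2"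
proof (cases "x \<ge> 0")
  case True then show ?thesis using exp_bound assms by simp
next
  case False
  define y where "y = - x"
  have y: "0 \<le> y" "y \<le> 1" using False assms by (auto simp: y_def)
  have "1 + y + y\<^sup>2 / 2 \<le> exp y" by (rule exp_lower_Taylor_quadratic) (use y in simp)
  moreover have "(1 - y + y\<^sup>2) * (1 + y + y\<^sup>2 / 2) \<ge> 1"
  proof -
    have "(1 - y + y\<^sup>2) * (1 + y + y\<^sup>2 / 2) = 1 + y\<^sup>2/2 + y^3/2 + y^4/2"
      by (simp add: power2_eq_square power3_eq_cube power4_eq_xxxx) (simp add: algebra_simps add_divide_distrib diff_divide_distrib)
    moreover have "y^3 \<ge> 0" "y^4 \<ge> 0" using y by auto
    ultimately show ?thesis by (simp add: add_nonneg_nonneg)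
  qed
  moreover have "1 - y + y\<^sup>2 > 0"
  proof -
    have "1 - y + y\<^sup>2 = (y - 1/2)\<^sup>2 + 3/4" by (simp add: power2_eq_square algebra_simps)
    moreover have "(y - 1/2)\<^sup>2 \<ge> 0" by simp
    ultimately show ?thesis by linarith
  qed
  ultimately have "1 \<le> (1 - y + y\<^sup>2) * exp y"
  proof -
    assume h1: "1 + y + y\<^sup>2 / 2 \<le> exp y" and h2: "1 \<le> (1 - y + y\<^sup>2) * (1 + y + y\<^sup>2 / 2)"
      and h3: "1 - y + y\<^sup>2 > 0"
    have "(1 - y + y\<^sup>2) * (1 + y + y\<^sup>2 / 2) \<le> (1 - y + y\<^sup>2) * exp y"
      by (rule mult_left_mono) (use h1 h3 in auto)
    then show ?thesis using h2 by linarith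
  qed
  then have "exp (- y) \<le> 1 - y + y\<^sup>2"
    by (simp add: exp_minus field_simps)
  then show ?thesis by (simp add: y_def)
qed

lemma two_point_bound:
  fixes p a b l :: real
  assumes p: "0 \<le> p" "p \<le> 1" and a: "0 \<le> a" "a \<le> 1" and b: "\<bar>b\<bar> \<le> p" and l: "\<bar>l\<bar> \<le> 1/2"
  shows "exp (l * ((1 - p) * a + b)) * p + exp (l * ((0 - p) * a + b)) * (1 - p)
         \<le> 1 + l * b + l\<^sup>2 * (p * (1 - p) + b\<^sup>2)"
proof -
  define x1 where "x1 = l * ((1 - p) * a + b)"
  define x0 where "x0 = l * ((0 - p) * a + b)"
  have h1: "\<bar>(1 - p) * a + b\<bar> \<le> 2"
  proof -
    have "\<bar>(1 - p) * a\<bar> \<le> 1" using p a by (auto simp: abs_mult intro: mult_le_one)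
    then show ?thesis using b p by linarith
  qed
  have h0: "\<bar>(0 - p) * a + b\<bar> \<le> 2"
  proof -
    have "\<bar>(0 - p) * a\<bar> \<le> 1" using p a by (auto simp: abs_mult intro: mult_le_one)
    then show ?thesis using b p by linarith
  qed
  have "\<bar>x1\<bar> \<le> 1/2 * 2" unfolding x1_def abs_mult by (rule mult_mono) (use l h1 in auto)
  then have e1: "exp x1 \<le> 1 + x1 + x1\<^sup>2" by (intro exp_quad_bound) simp
  have "\<bar>x0\<bar> \<le> 1/2 * 2" unfolding x0_def abs_mult by (rule mult_mono) (use l h0 in auto)
  then have e0: "exp x0 \<le> 1 + x0 + x0\<^sup>2" by (intro exp_quad_bound) simp
  have "exp x1 * p + exp x0 * (1 - p) \<le> (1 + x1 + x1\<^sup>2) * p + (1 + x0 + x0\<^sup>2) * (1 - p)"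
    using e1 e0 p by (intro add_mono mult_right_mono) auto
  also have "\<dots> = 1 + l * b + l\<^sup>2 * (p * (1 - p) * a\<^sup>2 + b\<^sup>2)"
    unfolding x1_def x0_def by (simp add: algebra_simps power2_eq_square)
  also have "\<dots> \<le> 1 + l * b + l\<^sup>2 * (p * (1 - p) + b\<^sup>2)"
  proof -
    have "a\<^sup>2 \<le> 1" using a by (simp add: abs_square_le_1)
    then have "p * (1 - p) * a\<^sup>2 \<le> p * (1 - p)" using p by (simp add: mult_left_le)
    then show ?thesis by (simp add: mult_left_mono)
  qed
  finally show ?thesis unfolding x1_def x0_def .
qed

lemma pmf_two_point:
  fixes q :: "nat pmf" and e1 e0 :: real
  assumes "e1 \<ge> 0" "e0 \<ge> 0"
  shows "(\<integral>\<^sup>+ i. ennreal (if i = k then e1 else e0) \<partial>measure_pmf q)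
         = ennreal (e1 * pmf q k + e0 * (1 - pmf q k))"
proof -
  have "(\<integral>\<^sup>+ i. ennreal (if i = k then e1 else e0) \<partial>measure_pmf q)
      = (\<integral>\<^sup>+ i. ennreal e1 * indicator {k} i + ennreal e0 * indicator (UNIV - {k}) i \<partial>measure_pmf q)"
    by (rule nn_integral_cong) (auto simp: indicator_def)
  also have "\<dots> = ennreal e1 * emeasure (measure_pmf q) {k} + ennreal e0 * emeasure (measure_pmf q) (UNIV - {k})"
    by (subst nn_integral_add) (auto simp: nn_integral_cmult_indicator)
  also have "emeasure (measure_pmf q) (UNIV - {k}) = ennreal (1 - pmf q k)"
  proof -
    have "measure (measure_pmf q) (UNIV - {k}) = 1 - pmf q k"
      using measure_pmf.prob_compl[of "{k}" q] by (simp add: measure_pmf_single)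
    then show ?thesis by (simp add: measure_pmf.emeasure_eq_measure)
  qed
  also have "emeasure (measure_pmf q) {k} = ennreal (pmf q k)" by (simp add: emeasure_pmf_single)
  finally show ?thesis using assms
    by (simp add: ennreal_mult[symmetric] ennreal_plus[symmetric] pmf_le_1 pmf_nonneg del: ennreal_plus)
qed

lemma step_bound:
  fixes D :: "'b measure" and q :: "nat pmf" and g X :: "'b \<Rightarrow> real" and l p \<mu> :: real
  assumes D: "prob_space D" and gm: "g \<in> borel_measurable D" and Xm: "X \<in> borel_measurable D"
    and g01: "\<forall>r. g r \<in> {0..1}" and X01: "AE r in D. X r \<in> {0..1}"
    and pk: "pmf q k = p" and l: "\<bar>l\<bar> \<le> 1/2" and mu: "\<mu> = integral\<^sup>L D X"
  shows "(\<integral>\<^sup>+ x. ennreal (exp (l * (((if snd x = k then 1 else 0) - p) * g (fst x) + p * (X (fst x) - \<mu>))))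
            \<partial>(D \<Otimes>\<^sub>M measure_pmf q)) \<le> ennreal (exp (l\<^sup>2 * p))"
proof -
  interpret D: prob_space D by (rule D)
  have p: "0 \<le> p" "p \<le> 1" using pk pmf_nonneg pmf_le_1 by metis+
  define F where "F x = ennreal (exp (l * (((if snd x = k then 1 else 0) - p) * g (fst x) + p * (X (fst x) - \<mu>))))" for x
  define \<psi> where "\<psi> r = 1 + l * (p * (X r - \<mu>)) + l\<^sup>2 * (p * (1 - p) + (p * (X r - \<mu>))\<^sup>2)" for r
  have Fm: "F \<in> borel_measurable (D \<Otimes>\<^sub>M measure_pmf q)"
    unfolding F_def using gm Xm by measurable
  have Xint: "integrable D X"
    by (rule D.integrable_const_bound[where B=1]) (use X01 Xm in auto)
  have mu01: "\<mu> \<in> {0..1}"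
  proof -
    have "0 \<le> integral\<^sup>L D X" by (rule integral_nonneg_AE) (use X01 in auto)
    moreover have "integral\<^sup>L D X \<le> integral\<^sup>L D (\<lambda>_. 1)"
      by (rule integral_mono_AE) (use X01 Xint in auto)
    ultimately show ?thesis using mu D.prob_space by simp
  qed
  have "(\<integral>\<^sup>+ x. F x \<partial>(D \<Otimes>\<^sub>M measure_pmf q)) = (\<integral>\<^sup>+ r. (\<integral>\<^sup>+ i. F (r, i) \<partial>measure_pmf q) \<partial>D)"
    by (rule measure_pmf.nn_integral_fst[symmetric]) (rule Fm)
  also have "\<dots> \<le> (\<integral>\<^sup>+ r. ennreal (\<psi> r) \<partial>D)"
  proof (rule nn_integral_mono_AE)
    show "AE r in D. (\<integral>\<^sup>+ i. F (r, i) \<partial>measure_pmf q) \<le> ennreal (\<psi> r)"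
      using X01
    proof eventually_elim
      case (elim r)
      define a where "a = g r"
      define b where "b = p * (X r - \<mu>)"
      have a: "0 \<le> a" "a \<le> 1" using g01 by (auto simp: a_def)
      have "\<bar>X r - \<mu>\<bar> \<le> 1" using elim mu01 by auto
      then have b: "\<bar>b\<bar> \<le> p" unfolding b_def abs_mult using p by (simp add: mult_left_le)
      have "(\<integral>\<^sup>+ i. F (r, i) \<partial>measure_pmf q)
          = (\<integral>\<^sup>+ i. ennreal (if i = k then exp (l * ((1 - p) * a + b)) else exp (l * ((0 - p) * a + b))) \<partial>measure_pmf q)"
        by (rule nn_integral_cong) (simp add: F_def a_def b_def)
      also have "\<dots> = ennreal (exp (l * ((1 - p) * a + b)) * p + exp (l * ((0 - p) * a + b)) * (1 - p))"
        by (subst pmf_two_point) (auto simp: pk)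
      also have "\<dots> \<le> ennreal (\<psi> r)"
        using two_point_bound[OF p a b l] unfolding \<psi>_def b_def by (rule ennreal_leI)
      finally show ?case .
    qed
  qed
  also have "\<dots> = ennreal (integral\<^sup>L D \<psi>)"
  proof (rule nn_integral_eq_integral)
    show "integrable D \<psi>"
    proof (rule D.integrable_const_bound[where B=4])
      show "\<psi> \<in> borel_measurable D" unfolding \<psi>_def using Xm by measurable
      show "AE r in D. norm (\<psi> r) \<le> 4"
        using X01
      proof eventually_elim
        case (elim r)
        have e: "\<bar>X r - \<mu>\<bar> \<le> 1" using elim mu01 by auto
        then have "\<bar>l * (p * (X r - \<mu>))\<bar> \<le> 1/2 * 1" unfolding abs_mult using l p
          by (intro mult_mono) (auto simp: mult_le_one)
        moreover have "\<bar>p * (X r - \<mu>)\<bar> \<le> 1" using e p by (auto simp: abs_mult mult_le_one)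
        then have "(p * (X r - \<mu>))\<^sup>2 \<le> 1" by (simp add: abs_square_le_1)
        moreover have "p * (1 - p) \<le> 1" "0 \<le> p * (1 - p)" using p by (auto simp: mult_le_one)
        moreover have "l\<^sup>2 \<le> 1" using l by (simp add: abs_square_le_1)
        ultimately have "0 \<le> l\<^sup>2 * (p * (1 - p) + (p * (X r - \<mu>))\<^sup>2)"
            "l\<^sup>2 * (p * (1 - p) + (p * (X r - \<mu>))\<^sup>2) \<le> 1 * 2"
        proof -
          assume a1: "(p * (X r - \<mu>))\<^sup>2 \<le> 1" and a2: "p * (1 - p) \<le> 1" "0 \<le> p * (1 - p)" and a3: "l\<^sup>2 \<le> 1"
          have s: "p * (1 - p) + (p * (X r - \<mu>))\<^sup>2 \<le> 2" "0 \<le> p * (1 - p) + (p * (X r - \<mu>))\<^sup>2"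
            using a1 a2 by auto
          show "0 \<le> l\<^sup>2 * (p * (1 - p) + (p * (X r - \<mu>))\<^sup>2)" using s by simp
          show "l\<^sup>2 * (p * (1 - p) + (p * (X r - \<mu>))\<^sup>2) \<le> 1 * 2"
            by (rule mult_mono) (use s a3 in auto)
        qed
        moreover have aux: "\<And>A B::real. \<bar>A\<bar> \<le> 1/2 * 1 \<Longrightarrow> 0 \<le> B \<Longrightarrow> B \<le> 1 * 2 \<Longrightarrow> \<bar>1 + A + B\<bar> \<le> 4"
          by (auto simp: abs_le_iff)
        ultimately show ?case unfolding \<psi>_def real_norm_def
          using \<open>\<bar>l * (p * (X r - \<mu>))\<bar> \<le> 1/2 * 1\<close> by blast
      qed
    qed
    show "AE r in D. 0 \<le> \<psi> r"
      using X01
    proof eventually_elim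
      case (elim r)
      have "\<bar>X r - \<mu>\<bar> \<le> 1" using elim mu01 by auto
      then have "\<bar>l * (p * (X r - \<mu>))\<bar> \<le> 1/2 * 1" unfolding abs_mult using l p
        by (intro mult_mono) (auto simp: mult_le_one)
      moreover have "0 \<le> l\<^sup>2 * (p * (1 - p) + (p * (X r - \<mu>))\<^sup>2)" using p by auto
      ultimately show ?case unfolding \<psi>_def by linarith
    qed
  qed
  also have "\<dots> \<le> ennreal (exp (l\<^sup>2 * p))"
  proof (rule ennreal_leI)
    have i2: "integrable D (\<lambda>r. (X r - \<mu>)\<^sup>2)"
    proof (rule D.integrable_const_bound[where B=1])
      show "AE r in D. norm ((X r - \<mu>)\<^sup>2) \<le> 1"
        using X01 by eventually_elim (use mu01 in \<open>auto simp: abs_square_le_1\<close>)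
    qed (use Xm in measurable)
    have "integral\<^sup>L D \<psi> = 1 + l * p * (integral\<^sup>L D X - \<mu>) + l\<^sup>2 * (p * (1 - p) + p\<^sup>2 * integral\<^sup>L D (\<lambda>r. (X r - \<mu>)\<^sup>2))"
    proof -
      have eq: "\<psi> = (\<lambda>r. ((1 + l\<^sup>2 * (p * (1 - p))) + (l * p) * (X r - \<mu>)) + (l\<^sup>2 * p\<^sup>2) * (X r - \<mu>)\<^sup>2)"
        by (auto simp: fun_eq_iff \<psi>_def power2_eq_square algebra_simps)
      have i1: "integrable D (\<lambda>r. X r - \<mu>)" using Xint by auto
      have "integral\<^sup>L D \<psi> = integral\<^sup>L D (\<lambda>r. (1 + l\<^sup>2 * (p * (1 - p))) + (l * p) * (X r - \<mu>)) + integral\<^sup>L D (\<lambda>r. (l\<^sup>2 * p\<^sup>2) * (X r - \<mu>)\<^sup>2)"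
        unfolding eq by (rule Bochner_Integration.integral_add) (use i1 i2 in auto)
      also have "integral\<^sup>L D (\<lambda>r. (1 + l\<^sup>2 * (p * (1 - p))) + (l * p) * (X r - \<mu>)) = (1 + l\<^sup>2 * (p * (1 - p))) + (l * p) * integral\<^sup>L D (\<lambda>r. X r - \<mu>)"
        by (subst Bochner_Integration.integral_add) (use i1 D.prob_space in auto)
      also have "integral\<^sup>L D (\<lambda>r. X r - \<mu>) = integral\<^sup>L D X - \<mu>"
        by (subst Bochner_Integration.integral_diff) (use Xint D.prob_space in auto)
      also have "integral\<^sup>L D (\<lambda>r. (l\<^sup>2 * p\<^sup>2) * (X r - \<mu>)\<^sup>2) = (l\<^sup>2 * p\<^sup>2) * integral\<^sup>L D (\<lambda>r. (X r - \<mu>)\<^sup>2)"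
        by simp
      finally show ?thesis by (simp add: algebra_simps)
    qed
    moreover have "integral\<^sup>L D (\<lambda>r. (X r - \<mu>)\<^sup>2) \<le> integral\<^sup>L D (\<lambda>_. 1)"
    proof (rule integral_mono_AE)
      show "AE r in D. (X r - \<mu>)\<^sup>2 \<le> 1"
        using X01 by eventually_elim (use mu01 in \<open>auto simp: abs_square_le_1\<close>)
    qed (use i2 in auto)
    then have "integral\<^sup>L D (\<lambda>r. (X r - \<mu>)\<^sup>2) \<le> 1" using D.prob_space by simp
    then have "l\<^sup>2 * (p * (1 - p) + p\<^sup>2 * integral\<^sup>L D (\<lambda>r. (X r - \<mu>)\<^sup>2)) \<le> l\<^sup>2 * (p * (1 - p) + p\<^sup>2 * 1)"
      by (intro mult_left_mono add_left_mono) auto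
    ultimately have "integral\<^sup>L D \<psi> \<le> 1 + l\<^sup>2 * p" using mu by (simp add: algebra_simps power2_eq_square)
    also have "\<dots> \<le> exp (l\<^sup>2 * p)" by (rule exp_ge_add_one_self_aux) (use p in auto)
    finally show "integral\<^sup>L D \<psi> \<le> exp (l\<^sup>2 * p)" .
  qed
  finally show ?thesis unfolding F_def .
qed


lemma chernoff_nn:
  fixes \<Omega> :: "'a measure" and S :: "'a \<Rightarrow> real" and l a B :: real
  assumes Sm: "S \<in> borel_measurable \<Omega>" and l: "0 < l"
    and mgf: "(\<integral>\<^sup>+ w. ennreal (exp (l * S w)) \<partial>\<Omega>) \<le> ennreal B"
  shows "emeasure \<Omega> {w \<in> space \<Omega>. a \<le> S w} \<le> ennreal (B * exp (- l * a))"
proof -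
  have "emeasure \<Omega> {w \<in> space \<Omega>. a \<le> S w} = (\<integral>\<^sup>+ w. indicator {w \<in> space \<Omega>. a \<le> S w} w \<partial>\<Omega>)"
    by (rule nn_integral_indicator[symmetric]) (use Sm in measurable)
  also have "\<dots> \<le> (\<integral>\<^sup>+ w. ennreal (exp (l * S w)) * ennreal (exp (- l * a)) \<partial>\<Omega>)"
  proof (rule nn_integral_mono)
    fix w assume "w \<in> space \<Omega>"
    show "indicator {w \<in> space \<Omega>. a \<le> S w} w \<le> ennreal (exp (l * S w)) * ennreal (exp (- l * a))"
    proof (cases "a \<le> S w")
      case True
      have "l * a \<le> l * S w" using True l by (simp add: mult_left_mono)
      then have "0 \<le> l * S w + - l * a" by simp
      then have "1 \<le> exp (l * S w + - l * a)" by simp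
      then have "1 \<le> exp (l * S w) * exp (- l * a)" by (simp only: exp_add)
      then show ?thesis using True \<open>w \<in> space \<Omega>\<close> by (simp add: ennreal_mult[symmetric] indicator_def)
    qed (simp add: indicator_def)
  qed
  also have "\<dots> = (\<integral>\<^sup>+ w. ennreal (exp (l * S w)) \<partial>\<Omega>) * ennreal (exp (- l * a))"
    by (rule nn_integral_multc) (use Sm in measurable)
  also have "\<dots> \<le> ennreal B * ennreal (exp (- l * a))"
    by (rule mult_right_mono) (use mgf in auto)
  also have "\<dots> \<le> ennreal (B * exp (- l * a))"
    by (cases "B \<ge> 0") (auto simp: ennreal_mult ennreal_neg)
  finally show ?thesis .
qed

theorem lemma5:
  fixes K m :: nat
    and Delta r :: "nat \<Rightarrow> real"
    and D :: "(nat \<Rightarrow> real) measure"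
    and q :: "nat pmf"
    and adv :: "nat \<Rightarrow> (nat \<Rightarrow> (nat \<Rightarrow> real) \<times> nat) \<Rightarrow> (nat \<Rightarrow> real) \<Rightarrow> (nat \<Rightarrow> real)"
    and k :: nat
  assumes K: "K \<ge> 2"
    and reach: "barbat_reach K m Delta r"
    and D_prob: "prob_space D"
    and D_sets: "sets D = sets (PiM {..<K} (\<lambda>_. borel))"
    and D_range: "AE x in D. \<forall>j<K. x j \<in> {0..1}"
    and q_def: "\<forall>j<K. pmf q j = barbat_ntil K m Delta r j / real (barbat_N K m)"
    and adv_range: "\<forall>t h x j. j < K \<longrightarrow> adv t h x j \<in> {0..1}"
    and adv_meas: "\<forall>t<barbat_N K m. \<forall>j<K.
          (\<lambda>w. corrupted adv t w j) \<in> borel_measurable (epoch_space (barbat_N K m) D q)"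
    and k: "k < K"
  shows "measure (epoch_space (barbat_N K m) D q)
           {w \<in> space (epoch_space (barbat_N K m) D q).
              \<bar>epoch_r adv (barbat_N K m) (barbat_ntil K m Delta r k) k w - integral\<^sup>L D (\<lambda>x. x k)\<bar>
                \<ge> sqrt (4 * ln (4 / barbat_beta K m) / barbat_ntil K m Delta r k)
                  + 2 * epoch_C adv K (barbat_N K m) w / real (barbat_N K m)}
         \<le> barbat_beta K m"
proof -
  define N where "N = barbat_N K m"
  define nt where "nt = barbat_ntil K m Delta r k"
  define \<beta> where "\<beta> = barbat_beta K m"
  define L where "L = ln (4 / \<beta>)"
  define M where "M = D \<Otimes>\<^sub>M measure_pmf q"
  define \<Omega> where "\<Omega> = epoch_space N D q"
  define \<mu> where "\<mu> = integral\<^sup>L D (\<lambda>x. x k)"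
  define p where "p = nt / real N"
  define \<epsilon> where "\<epsilon> = sqrt (4 * L / nt)"
  define tm where "tm t w = ((if snd (w t) = k then 1 else 0) - p) * corrupted adv t w k + p * (fst (w t) k - \<mu>)"
    for t and w :: "nat \<Rightarrow> (nat \<Rightarrow> real) \<times> nat"
  define Z where "Z w = (\<Sum>t<N. tm t w)" for w
  have \<Omega>_def': "\<Omega> = PiM {..<N} (\<lambda>_. M)" unfolding \<Omega>_def epoch_space_def M_def ..
  interpret D: prob_space D by (rule D_prob)
  have Mprob: "prob_space M" unfolding M_def
    by (rule prob_space_pair) (auto intro: D_prob measure_pmf.prob_space_axioms)
  have \<Omega>prob: "prob_space \<Omega>" unfolding \<Omega>_def' by (rule prob_space_PiM) (rule Mprob)
  interpret \<Omega>: prob_space \<Omega> by (rule \<Omega>prob)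
  have inv: "m \<ge> 1" "\<forall>j<K. 1 / 2 ^ (m - 1) \<le> Delta j \<and> Delta j \<le> 1"
    using barbat_inv[OF reach K] by auto
  have \<beta>: "0 < \<beta>" "\<beta> < 1" using barbat_params[OF K inv(1)] by (auto simp: \<beta>_def)
  have L: "0 < L" using barbat_lambda_pos[OF K inv(1)] by (simp add: L_def \<beta>_def)
  have lamL: "barbat_lambda K m = 256 * L" using barbat_params(3)[OF K inv(1)] by (simp add: L_def \<beta>_def)
  have ntL: "256 * L \<le> nt" using ntil_ge[OF K inv(1) inv(2) k, of r] lamL by (simp add: nt_def)
  have nt: "0 < nt" using ntL L by linarith
  have Npos: "0 < real N"
  proof -
    have "0 < real K * barbat_lambda K m * 2 ^ (2 * (m - 1))"
      using K barbat_lambda_pos[OF K inv(1)] by simp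
    then show ?thesis using barbat_N_ge[OF K inv(1)] by (simp add: N_def)
  qed
  have pk: "pmf q k = p" using q_def k by (simp add: p_def nt_def N_def)
  have p01: "0 \<le> p" "p \<le> 1" using pk pmf_nonneg pmf_le_1 by metis+
  have pN: "p * real N = nt" using Npos by (simp add: p_def)
  have eps0: "0 \<le> \<epsilon>" using L nt by (simp add: \<epsilon>_def)
  have eps2: "\<epsilon>\<^sup>2 * nt = 4 * L" using L nt by (simp add: \<epsilon>_def)
  have eps1: "\<epsilon> \<le> 1"
  proof -
    have "4 * L / nt \<le> 1" using ntL L nt by (simp add: field_simps)
    then show ?thesis by (simp add: \<epsilon>_def)
  qed
  have epspos: "0 < \<epsilon>" using L nt by (simp add: \<epsilon>_def)
  have Xm: "(\<lambda>x. x k) \<in> borel_measurable D"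
    using measurable_component_singleton[of k "{..<K}" "\<lambda>_. borel"] k
    by (simp add: measurable_cong_sets[OF D_sets refl])
  have X01: "AE x in D. x k \<in> {0..1}" using D_range k by auto
  have Xint: "integrable D (\<lambda>x. x k)"
    by (rule D.integrable_const_bound[where B=1]) (use X01 Xm in auto)
  have mu1: "\<mu> \<le> 1"
  proof -
    have "integral\<^sup>L D (\<lambda>x. x k) \<le> integral\<^sup>L D (\<lambda>_. 1)"
      by (rule integral_mono_AE) (use X01 Xint in auto)
    then show ?thesis using D.prob_space by (simp add: \<mu>_def)
  qed
  have cm: "(\<lambda>w. corrupted adv t w k) \<in> borel_measurable \<Omega>" if "t < N" for t
    using adv_meas that k by (simp add: \<Omega>_def N_def)
  have tmm: "tm t \<in> borel_measurable \<Omega>" if t: "t < N" for t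
  proof -
    have wt: "(\<lambda>w. w t) \<in> measurable \<Omega> M" unfolding \<Omega>_def' using t by simp
    have "(\<lambda>w. fst (w t)) \<in> measurable \<Omega> D"
      using measurable_comp[OF wt[unfolded M_def] measurable_fst] by (simp add: M_def comp_def)
    then have a: "(\<lambda>w. fst (w t) k) \<in> borel_measurable \<Omega>"
      using measurable_comp[OF _ Xm] by (simp add: comp_def)
    have "(\<lambda>w. snd (w t)) \<in> measurable \<Omega> (measure_pmf q)"
      using measurable_comp[OF wt[unfolded M_def] measurable_snd] by (simp add: M_def comp_def)
    then have b: "(\<lambda>w. snd (w t)) \<in> measurable \<Omega> (count_space UNIV)" by simp
    have "(\<lambda>w. if snd (w t) = k then 1 else (0::real)) \<in> borel_measurable \<Omega>"
      using b by measurable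
    then show ?thesis unfolding tm_def using a cm[OF t] by measurable
  qed
  have Zm: "Z \<in> borel_measurable \<Omega>" unfolding Z_def using tmm by (intro borel_measurable_sum) auto
  have tail: "emeasure \<Omega> {w \<in> space \<Omega>. \<epsilon> * nt \<le> s * Z w} \<le> ennreal (exp (- L))"
    if s: "s = 1 \<or> s = -1" for s :: real
  proof -
    define l where "l = s * (\<epsilon> / 2)"
    have l: "\<bar>l\<bar> \<le> 1/2" using s eps0 eps1 by (auto simp: l_def)
    have l2: "l\<^sup>2 = \<epsilon>\<^sup>2 / 4" using s by (auto simp: l_def power2_eq_square)
    have chain: "(\<integral>\<^sup>+ w. ennreal (exp (\<Sum>t<N. l * tm t w)) \<partial>PiM {..<N} (\<lambda>_. M)) \<le> ennreal (exp (l\<^sup>2 * p)) ^ N"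
    proof (rule mgf_chain[OF Mprob])
      show "\<forall>t<N. (\<lambda>w. l * tm t w) \<in> borel_measurable (PiM {..<N} (\<lambda>_. M))"
        using tmm unfolding \<Omega>_def' by auto
      show "\<forall>t<N. \<forall>w. l * tm t w = l * tm t (restrict w {..t})"
      proof (intro allI impI)
        fix t w
        have "{..t} \<inter> {..<t} = {..<(t::nat)}" by auto
        then show "l * tm t w = l * tm t (restrict w {..t})" by (simp add: tm_def corrupted_def)
      qed
      show "\<forall>t<N. \<forall>w\<in>space (PiM {..<N} (\<lambda>_. M)). (\<integral>\<^sup>+ x. ennreal (exp (l * tm t (w(t := x)))) \<partial>M) \<le> ennreal (exp (l\<^sup>2 * p))"
      proof (intro allI impI ballI)
        fix t w assume t: "t < N" and w: "w \<in> space (PiM {..<N} (\<lambda>_. M))"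
        define g where "g r = adv t (restrict w {..<t}) r k" for r
        have upd: "(\<lambda>x. w(t:=x)) \<in> measurable M \<Omega>" unfolding \<Omega>_def' by (rule measurable_upd_in[OF w]) (use t in simp)
        have "(\<lambda>x. corrupted adv t (w(t:=x)) k) \<in> borel_measurable M"
          using measurable_comp[OF upd cm[OF t]] by (simp add: comp_def)
        moreover have "corrupted adv t (w(t:=x)) k = g (fst x)" for x
          by (simp add: corrupted_def g_def)
        ultimately have gM: "(\<lambda>x. g (fst x)) \<in> borel_measurable M" by simp
        have pr: "(\<lambda>r. (r, 0::nat)) \<in> measurable D M" unfolding M_def by measurable
        have gm: "g \<in> borel_measurable D" using measurable_comp[OF pr gM] by (simp add: comp_def)
        have "(\<integral>\<^sup>+ x. ennreal (exp (l * tm t (w(t := x)))) \<partial>M)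
            = (\<integral>\<^sup>+ x. ennreal (exp (l * (((if snd x = k then 1 else 0) - p) * g (fst x) + p * (fst x k - \<mu>)))) \<partial>(D \<Otimes>\<^sub>M measure_pmf q))"
          unfolding M_def by (rule nn_integral_cong) (simp add: tm_def corrupted_def g_def)
        also have "\<dots> \<le> ennreal (exp (l\<^sup>2 * p))"
          by (rule step_bound[OF D_prob gm Xm _ X01 pk l]) (use adv_range k in \<open>auto simp: g_def \<mu>_def\<close>)
        finally show "(\<integral>\<^sup>+ x. ennreal (exp (l * tm t (w(t := x)))) \<partial>M) \<le> ennreal (exp (l\<^sup>2 * p))" .
      qed
    qed
    have mgf: "(\<integral>\<^sup>+ w. ennreal (exp ((\<epsilon> / 2) * (s * Z w))) \<partial>\<Omega>) \<le> ennreal (exp L)"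
    proof -
      have "(\<integral>\<^sup>+ w. ennreal (exp ((\<epsilon> / 2) * (s * Z w))) \<partial>\<Omega>) = (\<integral>\<^sup>+ w. ennreal (exp (\<Sum>t<N. l * tm t w)) \<partial>PiM {..<N} (\<lambda>_. M))"
        unfolding \<Omega>_def' by (rule nn_integral_cong) (simp add: Z_def l_def sum_distrib_left mult.assoc mult.left_commute)
      also have "\<dots> \<le> ennreal (exp (l\<^sup>2 * p)) ^ N" by (rule chain)
      also have "\<dots> = ennreal (exp (l\<^sup>2 * p * real N))"
        by (simp add: ennreal_power exp_of_nat_mult[symmetric] mult.commute)
      also have "l\<^sup>2 * p * real N = L"
      proof -
        have "l\<^sup>2 * p * real N = l\<^sup>2 * nt" using pN by (simp add: mult.assoc)
        also have "\<dots> = (\<epsilon>\<^sup>2 * nt) / 4" using l2 by simp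
        also have "\<dots> = L" using eps2 by simp
        finally show ?thesis .
      qed
      finally show ?thesis .
    qed
    have "emeasure \<Omega> {w \<in> space \<Omega>. \<epsilon> * nt \<le> s * Z w} \<le> ennreal (exp L * exp (- (\<epsilon> / 2) * (\<epsilon> * nt)))"
      by (rule chernoff_nn[OF _ _ mgf]) (use Zm epspos in auto)
    also have "exp L * exp (- (\<epsilon> / 2) * (\<epsilon> * nt)) = exp (- L)"
    proof -
      have "- (\<epsilon> / 2) * (\<epsilon> * nt) = - 2 * L" using eps2 by (simp add: power2_eq_square field_simps)
      then show ?thesis by (simp add: exp_add[symmetric])
    qed
    finally show ?thesis .
  qed
  define E where "E = {w \<in> space \<Omega>.
              \<bar>epoch_r adv N nt k w - \<mu>\<bar> \<ge> \<epsilon> + 2 * epoch_C adv K N w / real N}"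
  define A1 where "A1 = {w \<in> space \<Omega>. \<epsilon> * nt \<le> 1 * Z w}"
  define A2 where "A2 = {w \<in> space \<Omega>. \<epsilon> * nt \<le> -1 * Z w}"
  have incl: "E \<subseteq> A1 \<union> A2"
  proof
    fix w assume "w \<in> E"
    then have w: "w \<in> space \<Omega>" and ev: "\<epsilon> + 2 * epoch_C adv K N w / real N \<le> \<bar>epoch_r adv N nt k w - \<mu>\<bar>"
      by (auto simp: E_def)
    define S where "S = epoch_S adv N k w"
    define R where "R = (\<Sum>t<N. corrupted adv t w k - fst (w t) k)"
    define C where "C = epoch_C adv K N w"
    have RC: "\<bar>R\<bar> \<le> C"
    proof -
      have "\<bar>R\<bar> \<le> (\<Sum>t<N. \<bar>corrupted adv t w k - fst (w t) k\<bar>)" unfolding R_def by (rule sum_abs)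
      also have "\<dots> \<le> C" unfolding C_def epoch_C_def by (rule Max_ge) (use k in auto)
      finally show ?thesis .
    qed
    have C0: "0 \<le> C" using RC by linarith
    have ZS: "Z w = S - nt * \<mu> - p * R"
    proof -
      have pt: "tm t w = (if snd (w t) = k then corrupted adv t w k else 0) - p * (corrupted adv t w k - fst (w t) k) - p * \<mu>" for t
        by (simp add: tm_def algebra_simps)
      have "Z w = (\<Sum>t<N. (if snd (w t) = k then corrupted adv t w k else 0)) - (\<Sum>t<N. p * (corrupted adv t w k - fst (w t) k)) - (\<Sum>t<N. p * \<mu>)"
        unfolding Z_def pt by (simp add: sum_subtractf)
      also have "(\<Sum>t<N. p * (corrupted adv t w k - fst (w t) k)) = p * (\<Sum>t<N. corrupted adv t w k - fst (w t) k)"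
        by (rule sum_distrib_left[symmetric])
      finally have "Z w = (\<Sum>t<N. (if snd (w t) = k then corrupted adv t w k else 0)) - p * (\<Sum>t<N. corrupted adv t w k - fst (w t) k) - (\<Sum>t<N. p * \<mu>)" .
      then show ?thesis using pN by (simp add: S_def epoch_S_def R_def mult.commute)
    qed
    have clip: "\<bar>epoch_r adv N nt k w - \<mu>\<bar> \<le> \<bar>S / nt - \<mu>\<bar>"
      unfolding epoch_r_def S_def[symmetric] using mu1 by (auto simp: min_def)
    have "\<bar>S / nt - \<mu>\<bar> = \<bar>Z w + p * R\<bar> / nt" using nt ZS by (simp add: field_simps)
    also have "\<dots> \<le> (\<bar>Z w\<bar> + p * \<bar>R\<bar>) / nt"
      using nt p01 by (intro divide_right_mono) (auto simp: abs_mult intro: order.trans[OF abs_triangle_ineq])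
    also have "\<dots> = \<bar>Z w\<bar> / nt + \<bar>R\<bar> / real N" using nt Npos by (simp add: p_def add_divide_distrib)
    also have "\<dots> \<le> \<bar>Z w\<bar> / nt + C / real N" using RC Npos by (simp add: divide_right_mono)
    finally have "\<epsilon> + 2 * C / real N \<le> \<bar>Z w\<bar> / nt + C / real N" using ev clip by (simp add: C_def)
    moreover have "0 \<le> C / real N" using C0 Npos by simp
    ultimately have "\<epsilon> \<le> \<bar>Z w\<bar> / nt" by simp
    then have "\<epsilon> * nt \<le> \<bar>Z w\<bar>" using nt by (simp add: field_simps)
    then show "w \<in> A1 \<union> A2" using w by (auto simp: A1_def A2_def abs_if split: if_splits)
  qed
  have A1m: "A1 \<in> sets \<Omega>" unfolding A1_def using Zm by measurable
  have A2m: "A2 \<in> sets \<Omega>" unfolding A2_def using Zm by measurable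
  have mA1: "measure \<Omega> A1 \<le> exp (- L)"
    using tail[of 1] unfolding A1_def[symmetric] by (simp add: \<Omega>.emeasure_eq_measure)
  have mA2: "measure \<Omega> A2 \<le> exp (- L)"
    using tail[of "-1"] unfolding A2_def[symmetric] by (simp add: \<Omega>.emeasure_eq_measure)
  have eL: "exp (- L) = \<beta> / 4" using \<beta> by (simp add: L_def exp_minus)
  have "measure \<Omega> E \<le> measure \<Omega> (A1 \<union> A2)"
    by (rule \<Omega>.finite_measure_mono[OF incl]) (use A1m A2m in auto)
  also have "\<dots> \<le> measure \<Omega> A1 + measure \<Omega> A2" by (rule measure_Un_le[OF A1m A2m])
  also have "\<dots> \<le> \<beta>" using mA1 mA2 eL \<beta> by linarith
  finally show ?thesis by (simp add: E_def \<Omega>_def N_def nt_def \<mu>_def \<epsilon>_def L_def \<beta>_def)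
qed

end
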